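(* Let $0<c<1/2$. For every $B\in\mathcal F$ and every integer $m\ge0$, $$g(m,B)\le\frac{2c}{1-c}\,\big|\mathrm{OPT}^m_{\mathrm{large}}(B)\big|,$$ where $$g(m,B)=\sum_{i\in\mathrm{OPT}^m_{\mathrm{large}}(B)}\ \sum_{B'\in\mathrm{Chain}[M(i),B]} c^{\,1+\mathrm{brank}(i,B')}.$$
   Context: Let $U$ be a finite ground set with weight function $w:U\to\mathbb{R}_{\ge0}$ taking pairwise distinct values. Let $\mathcal F$ be a laminar family of subsets of $U$ (for any $A,B\in\mathcal F$: $A\subseteq B$, $B\subseteq A$, or $A\cap B=\emptyset$) with $U\in\mathcal F$; each $A\in\mathcal F$ has a positive integer capacity $\mu(A)$, with $\mu(A)<\mu(B)$ whenever $A\subsetneq B$. A set $X\subseteq U$ is independent iff $|X\cap A|\le\mu(A)$ for all $A\in\mathcal F$. For $i\in U$, $M(i)$ denotes the minimal member of $\mathcal F$ containing $i$. For $A\subseteq B$ in $\mathcal F$, $\mathrm{Chain}[A,B]$ is the sequence of all $B'\in\mathcal F$ with $A\subseteq B'\subseteq B$, ordered by inclusion from $A$ up to $B$. For $B\in\mathcal F$, $\mathrm{OPT}(B)$ is the maximum-weight independent subset of $B$, and $\mathrm{OPT}^m_{\mathrm{large}}(B)$ is the set of the $m$ largest-weight elements of $\mathrm{OPT}(B)$ (all of $\mathrm{OPT}(B)$ if it has fewer than $m$ elements). The backward rank $\mathrm{brank}(i,B)$ is the number of elements of $\mathrm{OPT}(B)$ of weight less than $w(i)$. Standing convention of the paper: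 by padding $U$ with dummy elements of infinitesimal weight, one assumes $|\mathrm{OPT}(B)|=\mu(B)$ for every $B\in\mathcal F$. *)

theory Defs
  imports Main Complex_Main
begin

definition laminar :: "'a set set \<Rightarrow> bool" where
  "laminar F \<longleftrightarrow> (\<forall>A\<in>F. \<forall>B\<in>F. A \<subseteq> B \<or> B \<subseteq> A \<or> A \<inter> B = {})"

definition indep :: "'a set set \<Rightarrow> ('a set \<Rightarrow> nat) \<Rightarrow> 'a set \<Rightarrow> bool" where
  "indep F mu X \<longleftrightarrow> (\<forall>A\<in>F. card (X \<inter> A) \<le> mu A)"

definition is_opt :: "'a set set \<Rightarrow> ('a set \<Rightarrow> nat) \<Rightarrow> ('a \<Rightarrow> real) \<Rightarrow> 'a set \<Rightarrow> 'a set \<Rightarrow> bool" where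
  "is_opt F mu w B X \<longleftrightarrow> X \<subseteq> B \<and> indep F mu X \<and>
     (\<forall>Y. Y \<subseteq> B \<and> indep F mu Y \<longrightarrow> sum w Y \<le> sum w X)"

definition OPT :: "'a set set \<Rightarrow> ('a set \<Rightarrow> nat) \<Rightarrow> ('a \<Rightarrow> real) \<Rightarrow> 'a set \<Rightarrow> 'a set" where
  "OPT F mu w B = (THE X. is_opt F mu w B X)"

text \<open>The m largest-weight elements of OPT(B) (all of OPT(B) if it has fewer than m elements).\<close>
definition OPT_large :: "'a set set \<Rightarrow> ('a set \<Rightarrow> nat) \<Rightarrow> ('a \<Rightarrow> real) \<Rightarrow> nat \<Rightarrow> 'a set \<Rightarrow> 'a set" where
  "OPT_large F mu w m B = {i \<in> OPT F mu w B. card {j \<in> OPT F mu w B. w j > w i} < m}"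

definition brank :: "'a set set \<Rightarrow> ('a set \<Rightarrow> nat) \<Rightarrow> ('a \<Rightarrow> real) \<Rightarrow> 'a \<Rightarrow> 'a set \<Rightarrow> nat" where
  "brank F mu w i B = card {j \<in> OPT F mu w B. w j < w i}"

definition Mmin :: "'a set set \<Rightarrow> 'a \<Rightarrow> 'a set" where
  "Mmin F i = (THE A. A \<in> F \<and> i \<in> A \<and> (\<forall>A'\<in>F. i \<in> A' \<longrightarrow> A \<subseteq> A'))"

text \<open>Members of Chain[A,B] (as a set; the order is irrelevant for summation).\<close>
definition Chain :: "'a set set \<Rightarrow> 'a set \<Rightarrow> 'a set \<Rightarrow> 'a set set" where
  "Chain F A B = {B' \<in> F. A \<subseteq> B' \<and> B' \<subseteq> B}"

definition gfun :: "'a set set \<Rightarrow> ('a set \<Rightarrow> nat) \<Rightarrow> ('a \<Rightarrow> real) \<Rightarrow> real \<Rightarrow> nat \<Rightarrow> 'a set \<Rightarrow> real" where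
  "gfun F mu w c m B = (\<Sum>i\<in>OPT_large F mu w m B. \<Sum>B'\<in>Chain F (Mmin F i) B.
       c ^ (1 + brank F mu w i B'))"

end

theory Submission
  imports Defs
begin


lemma merge2:
  fixes a b e y :: real
  assumes "0 \<le> a" "a \<le> 1" "0 \<le> b" "b \<le> 1" "0 \<le> y*e" "y*e \<le> 1"
  shows "(1 - a*b) * (1 + y*e) \<le> (1-a)*(1+y*e*b) + (1-b)*(1+y*e*a)"
proof -
  have "(1-a)*(1+y*e*b) + (1-b)*(1+y*e*a) - (1 - a*b) * (1 + y*e) = (1-a)*(1-b)*(1-y*e)"
    by (simp add: algebra_simps)
  moreover have "0 \<le> (1-a)*(1-b)*(1-y*e)" using assms by (intro mult_nonneg_nonneg) auto
  ultimately show ?thesis by linarith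
qed

lemma mergeM:
  fixes c y :: real and t :: "'b \<Rightarrow> nat"
  assumes "finite C" "0 \<le> c" "c \<le> 1" "0 \<le> y" "y \<le> 1"
  shows "sum t C \<le> s \<Longrightarrow> (1 - c^(sum t C)) * (1 + y*c^(s - sum t C)) \<le> (\<Sum>D\<in>C. (1 - c^(t D)) * (1 + y * c^(s - t D)))"
  using assms(1)
proof (induction C rule: finite_induct)
  case empty
  then show ?case by simp
next
  case (insert D C)
  let ?s = "sum t C"
  have st: "sum t (insert D C) = t D + ?s" using insert by simp
  have IH: "(1 - c^?s) * (1 + y*c^(s - ?s)) \<le> (\<Sum>D\<in>C. (1 - c^(t D)) * (1 + y * c^(s - t D)))"
    using insert st by simp
  define a where "a = c^(t D)"
  define b where "b = c^?s"
  define e where "e = c^(s - t D - ?s)"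
  have "s - t D = (s - t D - ?s) + ?s" using insert.prems st by linarith
  then have e1: "c^(s - t D) = e*b" unfolding e_def b_def by (metis power_add)
  have "s - ?s = (s - t D - ?s) + t D" using insert.prems st by linarith
  then have e2: "c^(s - ?s) = e*a" unfolding e_def a_def by (metis power_add)
  have e3: "c^(t D + ?s) = a*b" unfolding a_def b_def by (simp add: power_add)
  have ye: "0 \<le> y*e" "y*e \<le> 1" unfolding e_def using assms
    by (auto intro: mult_le_one power_le_one)
  have "(1 - c^(sum t (insert D C))) * (1 + y*c^(s - sum t (insert D C)))
      = (1 - a*b)*(1+y*e)" unfolding st e3 e_def by (simp add: diff_diff_left)
  also have "\<dots> \<le> (1-a)*(1+y*e*b) + (1-b)*(1+y*e*a)"
    apply (rule merge2) using assms ye unfolding a_def b_def by (auto intro: power_le_one)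
  also have "\<dots> = (1 - c^(t D)) * (1 + y * c^(s - t D)) + (1 - c^?s) * (1 + y*c^(s - ?s))"
    unfolding e1 e2 a_def b_def by (simp add: mult.assoc)
  also have "\<dots> \<le> (1 - c^(t D)) * (1 + y * c^(s - t D)) + (\<Sum>D\<in>C. (1 - c^(t D)) * (1 + y * c^(s - t D)))"
    using IH by linarith
  finally show ?case using insert by simp
qed

lemma sum_UN_le:
  fixes f :: "'b \<Rightarrow> real"
  assumes "finite I" "\<forall>i\<in>I. finite (A i)" "\<forall>x. 0 \<le> f x"
  shows "sum f (\<Union>i\<in>I. A i) \<le> (\<Sum>i\<in>I. sum f (A i))"
  using assms(1,2)
proof (induction I rule: finite_induct)
  case empty then show ?case by simp
next
  case (insert i I)
  have fin: "finite (A i)" "finite (\<Union>i\<in>I. A i)" using insert by auto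
  have "sum f (\<Union>j\<in>insert i I. A j) = sum f (A i \<union> (\<Union>j\<in>I. A j))" by simp
  also have "\<dots> = sum f (A i) + sum f (\<Union>j\<in>I. A j) - sum f (A i \<inter> (\<Union>j\<in>I. A j))"
    using sum_Un[OF fin] by simp
  also have "\<dots> \<le> sum f (A i) + sum f (\<Union>j\<in>I. A j)"
    using assms(3) by (simp add: sum_nonneg)
  also have "\<dots> \<le> sum f (A i) + (\<Sum>j\<in>I. sum f (A j))" using insert by simp
  finally show ?case using insert by simp
qed

lemma one_minus_pow_le:
  fixes c :: real assumes "0 \<le> c" "c \<le> 1"
  shows "1 - c^d \<le> (1-c) * real d"
proof -
  have "1 + real d * (c - 1) \<le> (1 + (c-1))^d" by (rule Bernoulli_inequality) (use assms in simp)
  then show ?thesis by (simp add: algebra_simps)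
qed

lemma final_arith:
  fixes a b y c X :: real and s sg :: nat
  assumes "0 \<le> a" "a \<le> 1" "0 \<le> b" "b \<le> 1" "0 \<le> y" "y \<le> 1" "0 < c" "c < 1"
    and "sg \<le> s" and "1 - b \<le> (1-c) * real (s - sg)"
    and "(1-c) * X \<le> 2*(1-c)*real sg - (1-a)*(1+y*b)"
  shows "(1-c)*((y - y*(a*b)) + X) \<le> 2*(1-c)*real s - (1 - a*b)*(1 + y*c)"
proof -
  have e1: "(1-c)*((y - y*(a*b)) + X) = ((1-a*b)*(1+y) - (1-a*b)*(1+y*c)) + (1-c)*X"
    by algebra
  have e: "(1-a*b)*(1+y) - (1-a)*(1+y*b) = (1-b)*(a+y)" by algebra
  have "(1-b)*(a+y) \<le> (1-b)*2" using assms by (intro mult_left_mono) auto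
  have rs: "real s = real sg + real (s - sg)" using assms by simp
  have "(1-c)*((y - y*(a*b)) + X) \<le> ((1-a*b)*(1+y) - (1-a*b)*(1+y*c)) + (2*(1-c)*real sg - (1-a)*(1+y*b))"
    unfolding e1 using assms(11) by linarith
  also have "\<dots> = (1-b)*(a+y) - (1-a*b)*(1+y*c) + 2*(1-c)*real sg" using e by linarith
  also have "\<dots> \<le> 2*(1-c)*real (s - sg) - (1-a*b)*(1+y*c) + 2*(1-c)*real sg"
  proof -
    have l: "\<And>P Q R T bb::real. P \<le> bb*2 \<Longrightarrow> bb \<le> Q \<Longrightarrow> P - R + 2*T \<le> 2*Q - R + 2*T" by linarith
    have "(1-b)*(a+y) - (1-a*b)*(1+y*c) + 2*((1-c)*real sg) \<le> 2*((1-c)*real (s - sg)) - (1-a*b)*(1+y*c) + 2*((1-c)*real sg)"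
      by (rule l[OF `(1-b)*(a+y) \<le> (1-b)*2` assms(10)])
    then show ?thesis by (simp only: mult.assoc)
  qed
  also have "\<dots> = 2*(1-c)*real s - (1 - a*b)*(1 + y*c)" unfolding rs by algebra
  finally show ?thesis .
qed

lemma key:
  fixes F :: "'a set set" and mu :: "'a set \<Rightarrow> nat" and S :: "'a set" and c :: real
  assumes finF: "finite F" and finA: "\<forall>A\<in>F. finite A" and lam: "laminar F"
    and mono: "\<forall>A\<in>F. \<forall>A'\<in>F. A \<subset> A' \<longrightarrow> mu A < mu A'"
    and sle: "\<forall>A\<in>F. card (S \<inter> A) \<le> mu A"
    and c0: "0 < c" and c1: "c < 1"
  shows "B0 \<in> F \<Longrightarrow> (1-c) * (\<Sum>B'\<in>{B'\<in>F. B' \<subseteq> B0}. c^(mu B' - card (S\<inter>B')) - c^(mu B'))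
     \<le> 2*(1-c)*real (card(S\<inter>B0)) - (1 - c^card(S\<inter>B0)) * (1 + c^(mu B0 - card(S\<inter>B0) + 1))"
proof (induction "card B0" arbitrary: B0 rule: less_induct)
  case less
  define f where "f B' = c^(mu B' - card (S\<inter>B')) - c^(mu B')" for B'
  define sc where "sc D = card (S \<inter> D)" for D
  define s where "s = sc B0"
  define mm where "mm = mu B0"
  define Ch where "Ch = {D\<in>F. D \<subset> B0 \<and> \<not>(\<exists>D'\<in>F. D \<subset> D' \<and> D' \<subset> B0)}"
  define FD where "FD D = {B'\<in>F. B' \<subseteq> D}" for D
  have B0F: "B0 \<in> F" by fact
  have finB0: "finite B0" using finA B0F by auto
  have fnn: "0 \<le> f B'" if "B' \<in> F" for B'
    unfolding f_def using c0 c1 by (simp add: power_decreasing)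
  have finFD: "finite (FD D)" for D unfolding FD_def using finF by simp
  have finCh: "finite Ch" unfolding Ch_def using finF by simp
  have split: "FD B0 = insert B0 {B'\<in>F. B' \<subset> B0}" unfolding FD_def using B0F by auto
  have sumsplit: "sum f (FD B0) = f B0 + sum f {B'\<in>F. B' \<subset> B0}"
    unfolding split using finF by (subst sum.insert) auto
  have cover: "{B'\<in>F. B' \<subset> B0} \<subseteq> (\<Union>D\<in>Ch. FD D)"
  proof
    fix B' assume B': "B' \<in> {B'\<in>F. B' \<subset> B0}"
    define P where "P = {D\<in>F. B' \<subseteq> D \<and> D \<subset> B0}"
    have "finite P" "P \<noteq> {}" unfolding P_def using finF B' by auto
    then obtain D where D: "D \<in> P" "\<forall>D'\<in>P. card D' \<le> card D"
      using Max_in[of "card ` P"] Max_ge[of "card ` P"]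
      by (metis (no_types, lifting) finite_imageI image_iff image_is_empty)
    have "D \<in> Ch"
    proof -
      have "\<not>(\<exists>D'\<in>F. D \<subset> D' \<and> D' \<subset> B0)"
      proof
        assume "\<exists>D'\<in>F. D \<subset> D' \<and> D' \<subset> B0"
        then obtain D' where "D' \<in> F" "D \<subset> D'" "D' \<subset> B0" by blast
        then have "D' \<in> P" "card D < card D'" using D(1) finA unfolding P_def
          by (auto intro: psubset_card_mono)
        then show False using D(2) by fastforce
      qed
      then show ?thesis using D(1) unfolding Ch_def P_def by auto
    qed
    then show "B' \<in> (\<Union>D\<in>Ch. FD D)" using D(1) B' unfolding P_def FD_def by auto
  qed
  have sub: "sum f {B'\<in>F. B' \<subset> B0} \<le> (\<Sum>D\<in>Ch. sum f (FD D))"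
  proof -
    define g where "g B' = (if B' \<in> F then f B' else 0)" for B'
    have gnn: "\<forall>x. 0 \<le> g x" unfolding g_def using fnn by auto
    have "sum f {B'\<in>F. B' \<subset> B0} = sum g {B'\<in>F. B' \<subset> B0}" unfolding g_def by simp
    also have "\<dots> \<le> sum g (\<Union>D\<in>Ch. FD D)"
      apply (rule sum_mono2) using finCh finFD cover gnn by auto
    also have "\<dots> \<le> (\<Sum>D\<in>Ch. sum g (FD D))"
      by (rule sum_UN_le) (use finCh finFD gnn in auto)
    also have "\<dots> = (\<Sum>D\<in>Ch. sum f (FD D))"
      unfolding g_def FD_def by (intro sum.cong refl) simp
    finally show ?thesis .
  qed
  have ChF: "D \<in> F" "D \<subset> B0" if "D \<in> Ch" for D using that unfolding Ch_def by auto
  have disj: "D1 \<inter> D2 = {}" if "D1 \<in> Ch" "D2 \<in> Ch" "D1 \<noteq> D2" for D1 D2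
  proof -
    have "D1 \<subseteq> D2 \<or> D2 \<subseteq> D1 \<or> D1 \<inter> D2 = {}" using lam ChF that unfolding laminar_def by blast
    moreover have "\<not> D1 \<subset> D2" using that(1) ChF[OF that(2)] ChF[OF that(1)] unfolding Ch_def by blast
    moreover have "\<not> D2 \<subset> D1" using that(2) ChF[OF that(1)] ChF[OF that(2)] unfolding Ch_def by blast
    ultimately show ?thesis using that(3) by blast
  qed
  define sg where "sg = (\<Sum>D\<in>Ch. sc D)"
  have sgle: "sg \<le> s"
  proof -
    have "sg = card (\<Union>D\<in>Ch. S \<inter> D)"
      unfolding sg_def sc_def
      apply (rule card_UN_disjoint[symmetric])
      using finCh apply simp
      using finA ChF apply blast
      using disj by blast
    also have "\<dots> \<le> card (S \<inter> B0)"
      by (rule card_mono) (use finB0 ChF in auto)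
    finally show ?thesis unfolding s_def sc_def .
  qed
  have smm: "s \<le> mm" unfolding s_def sc_def mm_def using sle B0F by auto
  define y where "y = c^(mm - s)"
  have y01: "0 \<le> y" "y \<le> 1" unfolding y_def using c0 c1 by (auto intro: power_le_one)
  have child: "(1-c) * sum f (FD D) \<le> 2*(1-c)*real (sc D) - (1 - c^(sc D)) * (1 + y * c^(s - sc D))"
    if D: "D \<in> Ch" for D
  proof -
    have "card D < card B0" using ChF[OF D] finB0 by (simp add: psubset_card_mono)
    then have IH: "(1-c) * sum f (FD D) \<le> 2*(1-c)*real (sc D) - (1 - c^(sc D)) * (1 + c^(mu D - sc D + 1))"
      using less.hyps[of D] ChF[OF D] unfolding f_def FD_def sc_def by blast
    have scD: "sc D \<le> s" unfolding sc_def s_def by (rule card_mono) (use finB0 ChF[OF D] in auto)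
    have scmu: "sc D \<le> mu D" unfolding sc_def using sle ChF[OF D] by auto
    have mul: "mu D < mm" unfolding mm_def using mono ChF[OF D] B0F by auto
    have "y * c^(s - sc D) = c^(mm - s + (s - sc D))" unfolding y_def by (simp add: power_add)
    also have "\<dots> = c^(mm - sc D)" using scD smm by (simp add: algebra_simps)
    also have "\<dots> \<le> c^(mu D - sc D + 1)" by (rule power_decreasing) (use scmu mul c0 c1 in auto)
    finally have "y * c^(s - sc D) \<le> c^(mu D - sc D + 1)" .
    moreover have "0 \<le> 1 - c^(sc D)" using c0 c1 by (simp add: power_le_one)
    ultimately have "(1 - c^(sc D)) * (1 + y * c^(s - sc D)) \<le> (1 - c^(sc D)) * (1 + c^(mu D - sc D + 1))"
      by (intro mult_left_mono) auto
    then show ?thesis using IH by linarith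
  qed
  have "(1-c) * (\<Sum>D\<in>Ch. sum f (FD D)) = (\<Sum>D\<in>Ch. (1-c) * sum f (FD D))"
    by (simp add: sum_distrib_left)
  also have "\<dots> \<le> (\<Sum>D\<in>Ch. 2*(1-c)*real (sc D) - (1 - c^(sc D)) * (1 + y * c^(s - sc D)))"
    by (rule sum_mono) (use child in auto)
  also have "\<dots> = 2*(1-c)*real sg - (\<Sum>D\<in>Ch. (1 - c^(sc D)) * (1 + y * c^(s - sc D)))"
    unfolding sg_def by (simp add: sum_subtractf sum_distrib_left)
  also have "\<dots> \<le> 2*(1-c)*real sg - (1 - c^sg) * (1 + y * c^(s - sg))"
    using mergeM[OF finCh, of c y sc s] c0 c1 y01 sgle unfolding sg_def by simp
  finally have X: "(1-c) * (\<Sum>D\<in>Ch. sum f (FD D)) \<le> 2*(1-c)*real sg - (1 - c^sg) * (1 + y * c^(s - sg))" .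
  have fB0: "f B0 = y - y * (c^sg * c^(s - sg))"
  proof -
    have "c^sg * c^(s-sg) = c^s" using sgle by (simp add: power_add[symmetric])
    moreover have "c^mm = y * c^s" unfolding y_def using smm by (simp add: power_add[symmetric])
    ultimately show ?thesis unfolding f_def y_def s_def mm_def sc_def by simp
  qed
  have "(1-c) * (f B0 + sum f {B'\<in>F. B' \<subset> B0}) \<le> (1-c) * ((y - y * (c^sg * c^(s - sg))) + (\<Sum>D\<in>Ch. sum f (FD D)))"
    unfolding fB0 using sub c1 by (intro mult_left_mono) auto
  also have "\<dots> \<le> 2*(1-c)*real s - (1 - c^sg * c^(s - sg)) * (1 + y * c)"
    apply (rule final_arith)
    using c0 c1 y01 sgle X one_minus_pow_le[of c "s - sg"]
    by (auto intro: power_le_one)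
  also have "\<dots> = 2*(1-c)*real s - (1 - c^s) * (1 + c^(mm - s + 1))"
  proof -
    have "c^sg * c^(s-sg) = c^s" using sgle by (simp add: power_add[symmetric])
    moreover have "y * c = c^(mm - s + 1)" unfolding y_def by simp
    ultimately show ?thesis by simp
  qed
  finally have "(1-c) * sum f (FD B0) \<le> 2*(1-c)*real s - (1 - c^s) * (1 + c^(mm - s + 1))"
    unfolding sumsplit .
  then show ?case unfolding FD_def f_def s_def sc_def mm_def .
qed




definition greedy :: "'a set set \<Rightarrow> ('a set \<Rightarrow> nat) \<Rightarrow> ('a \<Rightarrow> real) \<Rightarrow> 'a set \<Rightarrow> 'a set \<Rightarrow> bool" where
  "greedy F mu w B X \<longleftrightarrow> X \<subseteq> B \<and> (\<forall>x\<in>B. x \<in> X \<longleftrightarrow> indep F mu (insert x {y\<in>X. w y > w x}))"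

lemma indep_mono: "indep F mu X \<Longrightarrow> Y \<subseteq> X \<Longrightarrow> finite X \<Longrightarrow> indep F mu Y"
  unfolding indep_def
  by (meson Int_mono card_mono dual_order.trans finite_Int order_refl)

locale LM =
  fixes U :: "'a set" and w :: "'a \<Rightarrow> real" and F :: "'a set set" and mu :: "'a set \<Rightarrow> nat"
  assumes finU: "finite U" and wnn: "\<forall>i\<in>U. w i \<ge> 0" and inj: "inj_on w U"
    and FU: "F \<subseteq> Pow U" and lam: "laminar F"
    and mono: "\<forall>A\<in>F. \<forall>A'\<in>F. A \<subset> A' \<longrightarrow> mu A < mu A'"
    and cardopt: "\<forall>B'\<in>F. \<forall>X. is_opt F mu w B' X \<longrightarrow> card X = mu B'"
begin

lemma finF: "finite F" using FU finU
  by (meson Finite_Set.finite_subset finite_Pow_iff)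

lemma FsubU: "A \<in> F \<Longrightarrow> A \<subseteq> U" using FU by auto

lemma finA: "A \<in> F \<Longrightarrow> finite A" using FsubU finU finite_subset by blast

lemma lamD: "A \<in> F \<Longrightarrow> A' \<in> F \<Longrightarrow> x \<in> A \<Longrightarrow> x \<in> A' \<Longrightarrow> A \<subseteq> A' \<or> A' \<subseteq> A"
  using lam unfolding laminar_def by blast

lemma winj: "x \<in> U \<Longrightarrow> y \<in> U \<Longrightarrow> x \<noteq> y \<Longrightarrow> w x \<noteq> w y"
  using inj unfolding inj_on_def by blast

lemma opt_exists: assumes "B \<in> F" shows "\<exists>X. is_opt F mu w B X"
proof -
  define C where "C = {Y. Y \<subseteq> B \<and> indep F mu Y}"
  have finC: "finite C" unfolding C_def using finA[OF assms] by simp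
  have "{} \<in> C" unfolding C_def indep_def by simp
  then have ne: "sum w ` C \<noteq> {}" by blast
  have "Max (sum w ` C) \<in> sum w ` C" using finC ne by (intro Max_in) auto
  then obtain X where X: "X \<in> C" "sum w X = Max (sum w ` C)" by auto
  have "\<forall>Y. Y \<subseteq> B \<and> indep F mu Y \<longrightarrow> sum w Y \<le> sum w X"
    using finC X(2) unfolding C_def by (auto intro: Max_ge)
  then show ?thesis using X(1) unfolding is_opt_def C_def by blast
qed


lemma opt_greedy:
  assumes BF: "B \<in> F" and opt: "is_opt F mu w B X"
  shows "greedy F mu w B X"
proof -
  have XB: "X \<subseteq> B" and iX: "indep F mu X"
    and mx: "\<forall>Y. Y \<subseteq> B \<and> indep F mu Y \<longrightarrow> sum w Y \<le> sum w X"
    using opt unfolding is_opt_def by auto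
  have BU: "B \<subseteq> U" using FsubU[OF BF] .
  have finX: "finite X" using XB finA[OF BF] finite_subset by blast
  have cX: "card X = mu B" using cardopt BF opt by blast
  have "x \<in> X \<longleftrightarrow> indep F mu (insert x {y\<in>X. w y > w x})" if xB: "x \<in> B" for x
  proof
    assume "x \<in> X"
    then show "indep F mu (insert x {y\<in>X. w y > w x})"
      using indep_mono[OF iX _ finX] by auto
  next
    assume ig: "indep F mu (insert x {y\<in>X. w y > w x})"
    show "x \<in> X"
    proof (rule ccontr)
      assume xX: "x \<notin> X"
      define Xg where "Xg = {y\<in>X. w y > w x}"
      have xU: "x \<in> U" using xB BU by auto
      show False
      proof (cases "indep F mu (insert x X)")
        case True
        have "sum w (insert x X) = w x + sum w X" using finX xX by simp
        then have "sum w X \<le> sum w (insert x X)" using wnn xU by auto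
        then have "is_opt F mu w B (insert x X)"
          using True xB XB mx unfolding is_opt_def by force
        then have "card (insert x X) = mu B" using cardopt BF by blast
        then show False using cX finX xX by simp
      next
        case False
        then obtain A where A: "A \<in> F" "card (insert x X \<inter> A) > mu A"
          unfolding indep_def by force
        have xA: "x \<in> A"
        proof (rule ccontr)
          assume "x \<notin> A"
          then have "insert x X \<inter> A = X \<inter> A" by auto
          then show False using A iX unfolding indep_def by auto
        qed
        have finXA: "finite (X \<inter> A)" for A using finX by simp
        have "insert x X \<inter> A = insert x (X \<inter> A)" using xA by auto
        then have "card (insert x X \<inter> A) = Suc (card (X \<inter> A))" using xX finXA by simp
        then have "card (X \<inter> A) = mu A" using A iX unfolding indep_def by fastforce
        define T where "T = {A\<in>F. x \<in> A \<and> card (X \<inter> A) = mu A}"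
        have "A \<in> T" unfolding T_def using A xA `card (X \<inter> A) = mu A` by auto
        have finT: "finite T" unfolding T_def using finF by simp
        have "Min (card ` T) \<in> card ` T" using finT `A \<in> T` by (intro Min_in) auto
        then obtain A0 where A0: "A0 \<in> T" "card A0 = Min (card ` T)" by auto
        have A0min: "card A0 \<le> card A'" if "A' \<in> T" for A'
          using A0(2) finT that by simp
        have A0F: "A0 \<in> F" and xA0: "x \<in> A0" and tA0: "card (X \<inter> A0) = mu A0"
          using A0(1) unfolding T_def by auto
        have "card (insert x Xg \<inter> A0) \<le> mu A0" using ig A0F unfolding indep_def Xg_def by blast
        moreover have "insert x Xg \<inter> A0 = insert x (Xg \<inter> A0)" using xA0 by auto
        moreover have "x \<notin> Xg" using xX unfolding Xg_def by auto
        moreover have "finite (Xg \<inter> A0)" unfolding Xg_def using finX by simp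
        ultimately have "card (Xg \<inter> A0) < card (X \<inter> A0)" using tA0 by simp
        then have "\<not> (X \<inter> A0 \<subseteq> Xg \<inter> A0)"
        proof (intro notI)
          assume "X \<inter> A0 \<subseteq> Xg \<inter> A0"
          moreover have "finite (Xg \<inter> A0)" unfolding Xg_def using finX by simp
          ultimately have "card (X \<inter> A0) \<le> card (Xg \<inter> A0)" by (simp add: card_mono)
          then show False using `card (Xg \<inter> A0) < card (X \<inter> A0)` by simp
        qed
        then obtain y where y: "y \<in> X" "y \<in> A0" "y \<notin> Xg" by blast
        have yU: "y \<in> U" using y XB BU by auto
        have "y \<noteq> x" using y xX by auto
        then have "w y \<noteq> w x" using winj yU xU by blast
        then have wyx: "w y < w x" using y unfolding Xg_def by auto
        define Z where "Z = insert x (X - {y})"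
        have ZB: "Z \<subseteq> B" unfolding Z_def using xB XB by auto
        have iZ: "indep F mu Z" unfolding indep_def
        proof
          fix A' assume A'F: "A' \<in> F"
          have cA': "card (X \<inter> A') \<le> mu A'" using iX A'F unfolding indep_def by blast
          show "card (Z \<inter> A') \<le> mu A'"
          proof (cases "x \<in> A'")
            case False
            then have "Z \<inter> A' \<subseteq> X \<inter> A'" unfolding Z_def by auto
            then have "card (Z \<inter> A') \<le> card (X \<inter> A')" using finXA by (intro card_mono) auto
            then show ?thesis using cA' by linarith
          next
            case xA': True
            show ?thesis
            proof (cases "y \<in> A'")
              case True
              have "Z \<inter> A' = insert x ((X \<inter> A') - {y})" unfolding Z_def using xA' by auto
              moreover have "x \<notin> (X \<inter> A') - {y}" using xX by auto
              moreover have "card ((X \<inter> A') - {y}) = card (X \<inter> A') - 1"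
                using True y(1) finXA by simp
              moreover have "card (X \<inter> A') \<ge> 1"
                using True y(1) finXA[of A'] by (metis IntI card_0_eq empty_iff less_one not_le)
              ultimately have "card (Z \<inter> A') = card (X \<inter> A')" using finXA[of A'] by simp
              then show ?thesis using cA' by simp
            next
              case False
              have "A' \<subseteq> A0 \<or> A0 \<subseteq> A'" using lamD[OF A'F A0F xA' xA0] .
              then have "A' \<subset> A0" using False y(2) by auto
              then have "card A' < card A0" using finA[OF A0F] by (simp add: psubset_card_mono)
              then have "A' \<notin> T" using A0min by fastforce
              then have "card (X \<inter> A') \<noteq> mu A'" unfolding T_def using A'F xA' by auto
              then have lt: "card (X \<inter> A') < mu A'" using cA' by simp
              have "Z \<inter> A' \<subseteq> insert x (X \<inter> A')" unfolding Z_def by auto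
              then have "card (Z \<inter> A') \<le> card (insert x (X \<inter> A'))" using finXA by (intro card_mono) auto
              also have "\<dots> \<le> Suc (card (X \<inter> A'))" using finXA[of A'] by (simp add: card_insert_if)
              finally show ?thesis using lt by simp
            qed
          qed
        qed
        have "sum w Z = w x + sum w (X - {y})" unfolding Z_def using finX xX by simp
        also have "sum w (X - {y}) = sum w X - w y" using y(1) finX by (simp add: sum_diff1)
        finally have "sum w Z > sum w X" using wyx by simp
        moreover have "sum w Z \<le> sum w X" using mx ZB iZ by blast
        ultimately show False by simp
      qed
    qed
  qed
  then show ?thesis unfolding greedy_def using XB by blast
qed


lemma greedy_unique:
  assumes BU: "B \<subseteq> U" and gX: "greedy F mu w B X" and gY: "greedy F mu w B Y"
  shows "X = Y"
proof (rule ccontr)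
  assume ne: "X \<noteq> Y"
  have XB: "X \<subseteq> B" and YB: "Y \<subseteq> B" using gX gY unfolding greedy_def by auto
  define Ds where "Ds = (X - Y) \<union> (Y - X)"
  have finDs: "finite Ds" unfolding Ds_def using XB YB BU finU
    by (meson finite_Un finite_Diff finite_subset)
  have "Ds \<noteq> {}" unfolding Ds_def using ne by blast
  then have "Max (w ` Ds) \<in> w ` Ds" using finDs by (intro Max_in) auto
  then obtain z where z: "z \<in> Ds" "w z = Max (w ` Ds)" by auto
  have zmax: "w u \<le> w z" if "u \<in> Ds" for u using z(2) finDs that by simp
  have eq: "{y\<in>X. w y > w z} = {y\<in>Y. w y > w z}"
  proof -
    have "y \<in> X \<longleftrightarrow> y \<in> Y" if "w y > w z" for y
      using zmax[of y] that unfolding Ds_def by auto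
    then show ?thesis by auto
  qed
  have zB: "z \<in> B" using z(1) XB YB unfolding Ds_def by auto
  have "z \<in> X \<longleftrightarrow> z \<in> Y" using gX gY zB eq unfolding greedy_def by auto
  then show False using z(1) unfolding Ds_def by auto
qed

lemma OPT_props:
  assumes BF: "B \<in> F"
  shows "is_opt F mu w B (OPT F mu w B)" "greedy F mu w B (OPT F mu w B)"
    "card (OPT F mu w B) = mu B" "OPT F mu w B \<subseteq> B" "indep F mu (OPT F mu w B)"
proof -
  have ex1: "\<exists>!X. is_opt F mu w B X"
  proof -
    obtain X where X: "is_opt F mu w B X" using opt_exists[OF BF] by blast
    have "Y = X" if "is_opt F mu w B Y" for Y
      using greedy_unique[OF FsubU[OF BF] opt_greedy[OF BF that] opt_greedy[OF BF X]] .
    then show ?thesis using X by blast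
  qed
  show o: "is_opt F mu w B (OPT F mu w B)" unfolding OPT_def using theI'[OF ex1] .
  show "greedy F mu w B (OPT F mu w B)" using opt_greedy[OF BF o] .
  show "card (OPT F mu w B) = mu B" using cardopt BF o by blast
  show "OPT F mu w B \<subseteq> B" "indep F mu (OPT F mu w B)" using o unfolding is_opt_def by auto
qed

end


context LM begin

lemma prefix:
  assumes BF: "B \<in> F" and DF: "D \<in> F" and DB: "D \<subseteq> B"
  defines "X \<equiv> OPT F mu w B" and "Y \<equiv> OPT F mu w D"
  shows "X \<inter> D \<subseteq> Y" and "\<And>x y. x \<in> X \<inter> D \<Longrightarrow> y \<in> Y \<Longrightarrow> w x < w y \<Longrightarrow> y \<in> X"
proof -
  have gX: "greedy F mu w B X" and gY: "greedy F mu w D Y" and XB: "X \<subseteq> B" and YD: "Y \<subseteq> D"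
    and cY: "card Y = mu D" and iY: "indep F mu Y" and iX: "indep F mu X"
    using OPT_props[OF BF] OPT_props[OF DF] unfolding X_def Y_def by auto
  have BU: "B \<subseteq> U" using FsubU[OF BF] .
  have finX: "finite X" using XB finA[OF BF] finite_subset by blast
  have finY: "finite Y" using YD finA[OF DF] finite_subset by blast
  have gX': "\<And>x. x \<in> B \<Longrightarrow> x \<in> X \<longleftrightarrow> indep F mu (insert x {y\<in>X. w y > w x})"
    using gX unfolding greedy_def by blast
  have gY': "\<And>x. x \<in> D \<Longrightarrow> x \<in> Y \<longleftrightarrow> indep F mu (insert x {y\<in>Y. w y > w x})"
    using gY unfolding greedy_def by blast
  define S1 where "S1 = (X \<inter> D) - Y"
  define S2 where "S2 = {y \<in> Y - X. \<exists>x\<in>X \<inter> D. w x < w y}"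
  have empty: "S1 \<union> S2 = {}"
  proof (rule ccontr)
    assume ne: "S1 \<union> S2 \<noteq> {}"
    have finS: "finite (S1 \<union> S2)" unfolding S1_def S2_def using finX finY by auto
    have "Max (w ` (S1 \<union> S2)) \<in> w ` (S1 \<union> S2)" using finS ne by (intro Max_in) auto
    then obtain z where z: "z \<in> S1 \<union> S2" "w z = Max (w ` (S1 \<union> S2))" by (metis imageE)
    have zmax: "w u \<le> w z" if "u \<in> S1 \<union> S2" for u using z(2) finS that by simp
    have zD: "z \<in> D" using z(1) YD unfolding S1_def S2_def by auto
    have lighter: "\<exists>x\<in>X \<inter> D. w x < w z \<or> x = z"
      using z(1) unfolding S1_def S2_def by auto
    have eq: "{u\<in>X. w u > w z} \<inter> D = {u\<in>Y. w u > w z}"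
    proof
      show "{u\<in>X. w u > w z} \<inter> D \<subseteq> {u\<in>Y. w u > w z}"
      proof
        fix u assume u: "u \<in> {u\<in>X. w u > w z} \<inter> D"
        have "u \<in> Y"
        proof (rule ccontr)
          assume "u \<notin> Y" then have "u \<in> S1 \<union> S2" using u unfolding S1_def by auto
          then show False using zmax u by fastforce
        qed
        then show "u \<in> {u\<in>Y. w u > w z}" using u by auto
      qed
    next
      show "{u\<in>Y. w u > w z} \<subseteq> {u\<in>X. w u > w z} \<inter> D"
      proof
        fix u assume u: "u \<in> {u\<in>Y. w u > w z}"
        have "u \<in> X"
        proof (rule ccontr)
          assume "u \<notin> X"
          obtain x where x: "x \<in> X \<inter> D" "w x < w z \<or> x = z" using lighter by blast
          have "w x < w u" using x u by auto
          then have "u \<in> S1 \<union> S2" using u `u \<notin> X` x(1) unfolding S2_def by auto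
          then show False using zmax u by fastforce
        qed
        then show "u \<in> {u\<in>X. w u > w z} \<inter> D" using u YD by auto
      qed
    qed
    have finI: "finite (insert z {u\<in>X. w u > w z} \<inter> A)" for A using finX by simp
    show False
    proof (cases "z \<in> S1")
      case True
      then have zX: "z \<in> X" and zY: "z \<notin> Y" unfolding S1_def by auto
      then have "\<not> indep F mu (insert z {u\<in>Y. w u > w z})" using gY' zD by blast
      then obtain A where A: "A \<in> F" "card (insert z {u\<in>Y. w u > w z} \<inter> A) > mu A"
        unfolding indep_def by force
      have zA: "z \<in> A"
      proof (rule ccontr)
        assume "z \<notin> A"
        then have "insert z {u\<in>Y. w u > w z} \<inter> A \<subseteq> Y \<inter> A" by auto
        then have "card (insert z {u\<in>Y. w u > w z} \<inter> A) \<le> card (Y \<inter> A)" using finY by (intro card_mono) auto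
        then show False using A iY unfolding indep_def by fastforce
      qed
      have "A \<subseteq> D \<or> D \<subseteq> A" using lamD[OF A(1) DF zA zD] .
      then show False
      proof
        assume AD: "A \<subseteq> D"
        have "insert z {u\<in>Y. w u > w z} \<inter> A = insert z {u\<in>X. w u > w z} \<inter> A"
          using eq AD by blast
        moreover have "indep F mu (insert z {u\<in>X. w u > w z})" using gX' zX zD DB by blast
        ultimately show False using A unfolding indep_def by fastforce
      next
        assume DA: "D \<subseteq> A"
        show False
        proof (cases "D = A")
          case True
          have "insert z {u\<in>Y. w u > w z} \<inter> A = insert z {u\<in>X. w u > w z} \<inter> A"
            using eq True by blast
          moreover have "indep F mu (insert z {u\<in>X. w u > w z})" using gX' zX zD DB by blast
          ultimately show False using A unfolding indep_def by fastforce
        next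
          case False
          then have "mu D < mu A" using mono DF A(1) DA by blast
          have "card (insert z {u\<in>Y. w u > w z} \<inter> A) \<le> card (insert z {u\<in>Y. w u > w z})"
            using finY by (intro card_mono) auto
          also have "\<dots> \<le> Suc (card {u\<in>Y. w u > w z})" using finY by (simp add: card_insert_if)
          also have "card {u\<in>Y. w u > w z} \<le> card Y" using finY by (intro card_mono) auto
          finally show False using A cY `mu D < mu A` by simp
        qed
      qed
    next
      case False
      then have zS2: "z \<in> S2" using z(1) by auto
      then have zY: "z \<in> Y" and zX: "z \<notin> X" unfolding S2_def by auto
      obtain x0 where x0: "x0 \<in> X" "x0 \<in> D" "w x0 < w z" using zS2 unfolding S2_def by auto
      have "\<not> indep F mu (insert z {u\<in>X. w u > w z})" using gX' zX zD DB by blast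
      then obtain A where A: "A \<in> F" "card (insert z {u\<in>X. w u > w z} \<inter> A) > mu A"
        unfolding indep_def by force
      have zA: "z \<in> A"
      proof (rule ccontr)
        assume "z \<notin> A"
        then have "insert z {u\<in>X. w u > w z} \<inter> A \<subseteq> X \<inter> A" by auto
        then have "card (insert z {u\<in>X. w u > w z} \<inter> A) \<le> card (X \<inter> A)" using finX by (intro card_mono) auto
        then show False using A iX unfolding indep_def by fastforce
      qed
      have "A \<subseteq> D \<or> D \<subseteq> A" using lamD[OF A(1) DF zA zD] .
      then show False
      proof
        assume AD: "A \<subseteq> D"
        have "insert z {u\<in>X. w u > w z} \<inter> A = insert z {u\<in>Y. w u > w z} \<inter> A"
          using eq AD by blast
        moreover have "indep F mu (insert z {u\<in>Y. w u > w z})" using gY' zY zD by blast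
        ultimately show False using A unfolding indep_def by fastforce
      next
        assume DA: "D \<subseteq> A"
        have x0A: "x0 \<in> A" using x0 DA by auto
        have i0: "indep F mu (insert x0 {u\<in>X. w u > w x0})" using gX' x0 DB by blast
        have sub: "insert x0 ({u\<in>X. w u > w z} \<inter> A) \<subseteq> insert x0 {u\<in>X. w u > w x0} \<inter> A"
          using x0 x0A by auto
        have "card (insert z {u\<in>X. w u > w z} \<inter> A) = card (insert z ({u\<in>X. w u > w z} \<inter> A))"
          using zA by (metis Int_insert_left_if1)
        also have "\<dots> = Suc (card ({u\<in>X. w u > w z} \<inter> A))" using zX finX by simp
        also have "\<dots> = card (insert x0 ({u\<in>X. w u > w z} \<inter> A))" using x0(3) finX by simp
        also have "\<dots> \<le> card (insert x0 {u\<in>X. w u > w x0} \<inter> A)" using sub finX by (intro card_mono) auto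
        finally show False using A i0 unfolding indep_def by fastforce
      qed
    qed
  qed
  show "X \<inter> D \<subseteq> Y" using empty unfolding S1_def by auto
  show "\<And>x y. x \<in> X \<inter> D \<Longrightarrow> y \<in> Y \<Longrightarrow> w x < w y \<Longrightarrow> y \<in> X"
    using empty unfolding S2_def by auto
qed

end



lemma geo:
  fixes c :: real
  assumes "a \<le> b"
  shows "(1-c) * (\<Sum>k\<in>{a..<b}. c^(Suc k)) = c*(c^a - c^b)"
  using assms
proof (induction b rule: dec_induct)
  case base then show ?case by simp
next
  case (step n)
  have "(1-c) * (\<Sum>k\<in>{a..<Suc n}. c^(Suc k)) = (1-c) * (\<Sum>k\<in>{a..<n}. c^(Suc k)) + (1-c)*c^(Suc n)"
    using step(1) by (simp add: sum.atLeastLessThan_Suc algebra_simps)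
  also have "\<dots> = c*(c^a - c^n) + (1-c)*c^(Suc n)" using step by simp
  also have "\<dots> = c*(c^a - c^(Suc n))" by (simp add: algebra_simps)
  finally show ?case .
qed

context LM begin

lemma Mmin_props:
  assumes UF: "U \<in> F" and iU: "i \<in> U"
  shows "Mmin F i \<in> F" "i \<in> Mmin F i" "\<And>A'. A' \<in> F \<Longrightarrow> i \<in> A' \<Longrightarrow> Mmin F i \<subseteq> A'"
proof -
  define T where "T = {A\<in>F. i \<in> A}"
  have finT: "finite T" unfolding T_def using finF by simp
  have "U \<in> T" unfolding T_def using UF iU by simp
  then have "Min (card ` T) \<in> card ` T" using finT by (intro Min_in) auto
  then obtain A0 where A0: "A0 \<in> T" "card A0 = Min (card ` T)" by (metis imageE)
  have A0F: "A0 \<in> F" "i \<in> A0" using A0 unfolding T_def by auto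
  have A0min: "A0 \<subseteq> A'" if "A' \<in> F" "i \<in> A'" for A'
  proof -
    have "A0 \<subseteq> A' \<or> A' \<subseteq> A0" using lamD[OF A0F(1) that(1) A0F(2) that(2)] .
    moreover have "\<not> A' \<subset> A0"
    proof
      assume "A' \<subset> A0"
      then have "card A' < card A0" using finA[OF A0F(1)] by (simp add: psubset_card_mono)
      moreover have "card A0 \<le> card A'" using A0(2) finT that unfolding T_def by simp
      ultimately show False by simp
    qed
    ultimately show ?thesis by blast
  qed
  have eq: "Mmin F i = A0" unfolding Mmin_def
  proof (rule the_equality)
    show "A0 \<in> F \<and> i \<in> A0 \<and> (\<forall>A'\<in>F. i \<in> A' \<longrightarrow> A0 \<subseteq> A')" using A0F A0min by blast
  next
    fix A assume "A \<in> F \<and> i \<in> A \<and> (\<forall>A'\<in>F. i \<in> A' \<longrightarrow> A \<subseteq> A')"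
    then show "A = A0" using A0F A0min by blast
  qed
  show "Mmin F i \<in> F" "i \<in> Mmin F i" using eq A0F by auto
  show "\<And>A'. A' \<in> F \<Longrightarrow> i \<in> A' \<Longrightarrow> Mmin F i \<subseteq> A'" using eq A0min by auto
qed

lemma inner_bound:
  fixes c :: real
  assumes BF: "B' \<in> F" and SO: "S' \<subseteq> OPT F mu w B'"
    and up: "\<forall>i\<in>S'. \<forall>j\<in>OPT F mu w B'. w j > w i \<longrightarrow> j \<in> S'"
    and c0: "0 < c" and c1: "c < 1"
  shows "(1-c) * (\<Sum>i\<in>S'. c^(1 + brank F mu w i B')) \<le> c * (c^(mu B' - card S') - c^(mu B'))"
proof -
  define Oo where "Oo = OPT F mu w B'"
  define r where "r i = brank F mu w i B'" for i
  have cO: "card Oo = mu B'" and OB: "Oo \<subseteq> B'" unfolding Oo_def using OPT_props[OF BF] by auto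
  have finO: "finite Oo" using OB finA[OF BF] finite_subset by blast
  have OU: "Oo \<subseteq> U" using OB FsubU[OF BF] by auto
  have finS: "finite S'" using SO finO unfolding Oo_def by (rule finite_subset)
  have rdef: "r i = card {j\<in>Oo. w j < w i}" for i unfolding r_def brank_def Oo_def by simp
  have cS: "card S' \<le> mu B'" using card_mono[OF finO SO[folded Oo_def]] cO by simp
  have lt: "r i1 < r i2" if "i1 \<in> Oo" "i2 \<in> Oo" "w i1 < w i2" for i1 i2
  proof -
    have "{j\<in>Oo. w j < w i1} \<subset> {j\<in>Oo. w j < w i2}" using that by auto
    then show ?thesis unfolding rdef using finO by (intro psubset_card_mono) auto
  qed
  have inj: "inj_on r S'"
  proof (rule inj_onI)
    fix i1 i2 assume h: "i1 \<in> S'" "i2 \<in> S'" "r i1 = r i2"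
    show "i1 = i2"
    proof (rule ccontr)
      assume "i1 \<noteq> i2"
      then have "w i1 \<noteq> w i2" using winj h SO OU unfolding Oo_def by blast
      then have "w i1 < w i2 \<or> w i2 < w i1" by auto
      then show False using lt h SO unfolding Oo_def by fastforce
    qed
  qed
  have range: "r ` S' \<subseteq> {mu B' - card S'..<mu B'}"
  proof
    fix k assume "k \<in> r ` S'"
    then obtain i where i: "i \<in> S'" "k = r i" by blast
    have iO: "i \<in> Oo" using i SO unfolding Oo_def by auto
    have "{j\<in>Oo. w j < w i} \<subset> Oo" using iO by auto
    then have "r i < card Oo" unfolding rdef using finO by (intro psubset_card_mono) auto
    have "Oo \<subseteq> {j\<in>Oo. w j < w i} \<union> S'"
    proof
      fix j assume jO: "j \<in> Oo"
      show "j \<in> {j\<in>Oo. w j < w i} \<union> S'"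
      proof (cases "j = i")
        case True then show ?thesis using i by simp
      next
        case False
        then have "w j \<noteq> w i" using winj jO iO OU by blast
        then show ?thesis using up i jO unfolding Oo_def by force
      qed
    qed
    then have "card Oo \<le> card ({j\<in>Oo. w j < w i} \<union> S')" using finO finS by (intro card_mono) auto
    also have "\<dots> \<le> r i + card S'" unfolding rdef by (rule card_Un_le)
    finally have X: "card Oo \<le> r i + card S'" .
    have "mu B' - card S' \<le> r i" using X cO by linarith
    then show "k \<in> {mu B' - card S'..<mu B'}" using i cO `r i < card Oo` by simp
  qed
  have "(\<Sum>i\<in>S'. c^(1 + brank F mu w i B')) = (\<Sum>k\<in>r ` S'. c^(Suc k))"
    unfolding r_def by (simp add: sum.reindex[OF inj[unfolded r_def]])
  also have "\<dots> \<le> (\<Sum>k\<in>{mu B' - card S'..<mu B'}. c^(Suc k))"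
    by (rule sum_mono2) (use range c0 in auto)
  finally have "(1-c) * (\<Sum>i\<in>S'. c^(1 + brank F mu w i B')) \<le> (1-c) * (\<Sum>k\<in>{mu B' - card S'..<mu B'}. c^(Suc k))"
    using c1 by (intro mult_left_mono) auto
  also have "\<dots> = c * (c^(mu B' - card S') - c^(mu B'))" by (rule geo) simp
  finally show ?thesis .
qed

end



theorem lemma3:
  fixes U :: "'a set" and w :: "'a \<Rightarrow> real" and F :: "'a set set"
    and mu :: "'a set \<Rightarrow> nat" and c :: real and m :: nat and B :: "'a set"
  assumes "finite U"
    and "\<forall>i\<in>U. w i \<ge> 0"
    and "inj_on w U"
    and "F \<subseteq> Pow U" and "laminar F" and "U \<in> F"
    and "\<forall>A\<in>F. mu A > 0"
    and "\<forall>A\<in>F. \<forall>A'\<in>F. A \<subset> A' \<longrightarrow> mu A < mu A'"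
    and "\<forall>B'\<in>F. \<forall>X. is_opt F mu w B' X \<longrightarrow> card X = mu B'"
    and "0 < c" and "c < 1/2"
    and "B \<in> F"
  shows "gfun F mu w c m B \<le> 2 * c / (1 - c) * real (card (OPT_large F mu w m B))"
proof -
  interpret L: LM U w F mu using assms(1-5,8,9) by unfold_locales auto
  have c0: "0 < c" and c1: "c < 1" using assms(10,11) by auto
  have BF: "B \<in> F" by fact
  define Ob where "Ob = OPT F mu w B"
  define S where "S = OPT_large F mu w m B"
  define FB where "FB = {B'\<in>F. B' \<subseteq> B}"
  have SOb: "S \<subseteq> Ob" unfolding S_def Ob_def OPT_large_def by auto
  have ObB: "Ob \<subseteq> B" unfolding Ob_def using L.OPT_props[OF BF] by auto
  have BU: "B \<subseteq> U" using L.FsubU[OF BF] .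
  have finOb: "finite Ob" using ObB L.finA[OF BF] finite_subset by blast
  have finS: "finite S" using SOb finOb finite_subset by blast
  have finFB: "finite FB" unfolding FB_def using L.finF by simp
  have SU: "S \<subseteq> U" using SOb ObB BU by auto
  have Sdef: "i \<in> S \<longleftrightarrow> i \<in> Ob \<and> card {j\<in>Ob. w j > w i} < m" for i
    unfolding S_def Ob_def OPT_large_def by simp
  have sub1: "S \<inter> B' \<subseteq> OPT F mu w B'" if B': "B' \<in> FB" for B'
    using L.prefix(1)[OF BF, of B'] B' SOb unfolding FB_def Ob_def by auto
  have up1: "\<forall>i\<in>S \<inter> B'. \<forall>j\<in>OPT F mu w B'. w j > w i \<longrightarrow> j \<in> S \<inter> B'" if B': "B' \<in> FB" for B'
  proof (intro ballI impI)
    fix i j assume i: "i \<in> S \<inter> B'" and j: "j \<in> OPT F mu w B'" and wij: "w j > w i"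
    have B'F: "B' \<in> F" and B'B: "B' \<subseteq> B" using B' unfolding FB_def by auto
    have jOb: "j \<in> Ob" using L.prefix(2)[OF BF B'F B'B, of i j] i j wij SOb unfolding Ob_def by auto
    have jB': "j \<in> B'" using j L.OPT_props[OF B'F] by auto
    have "{y\<in>Ob. w y > w j} \<subseteq> {y\<in>Ob. w y > w i}" using wij by auto
    then have "card {y\<in>Ob. w y > w j} \<le> card {y\<in>Ob. w y > w i}" using finOb by (intro card_mono) auto
    also have "\<dots> < m" using i Sdef by auto
    finally show "j \<in> S \<inter> B'" using jOb jB' Sdef by auto
  qed
  define Q where "Q = (\<Sum>B'\<in>FB. c^(mu B' - card (S\<inter>B')) - c^(mu B'))"
  have chain: "Chain F (Mmin F i) B = {B'\<in>FB. i \<in> B'}" if iS: "i \<in> S" for i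
  proof -
    have iU: "i \<in> U" using iS SU by auto
    note M = L.Mmin_props[OF assms(6) iU]
    show ?thesis unfolding Chain_def FB_def using M by blast
  qed
  have "gfun F mu w c m B = (\<Sum>i\<in>S. \<Sum>B'\<in>{B'\<in>FB. i \<in> B'}. c^(1 + brank F mu w i B'))"
    unfolding gfun_def S_def[symmetric] using chain by (intro sum.cong refl) simp
  also have "\<dots> = (\<Sum>B'\<in>FB. \<Sum>i\<in>{i\<in>S. i \<in> B'}. c^(1 + brank F mu w i B'))"
    by (rule sum.swap_restrict[OF finS finFB])
  also have "\<dots> \<le> (\<Sum>B'\<in>FB. c/(1-c) * (c^(mu B' - card (S\<inter>B')) - c^(mu B')))"
  proof (rule sum_mono)
    fix B' assume B': "B' \<in> FB"
    have B'F: "B' \<in> F" using B' unfolding FB_def by auto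
    have eqS: "{i\<in>S. i \<in> B'} = S \<inter> B'" by auto
    have "(1-c) * (\<Sum>i\<in>S \<inter> B'. c^(1 + brank F mu w i B')) \<le> c * (c^(mu B' - card (S\<inter>B')) - c^(mu B'))"
      by (rule L.inner_bound[OF B'F sub1[OF B'] up1[OF B'] c0 c1])
    then have "(\<Sum>i\<in>S \<inter> B'. c^(1 + brank F mu w i B')) \<le> c * (c^(mu B' - card (S\<inter>B')) - c^(mu B')) / (1-c)"
      using c1 by (simp add: pos_le_divide_eq mult.commute)
    then show "(\<Sum>i\<in>{i\<in>S. i \<in> B'}. c^(1 + brank F mu w i B')) \<le> c/(1-c) * (c^(mu B' - card (S\<inter>B')) - c^(mu B'))"
      unfolding eqS by simp
  qed
  also have "\<dots> = c/(1-c) * Q" unfolding Q_def by (simp add: sum_distrib_left)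
  also have "\<dots> \<le> c/(1-c) * (2 * real (card S))"
  proof -
    have lamFB: "laminar FB" using assms(5) unfolding laminar_def FB_def by blast
    have sle: "\<forall>A\<in>FB. card (S \<inter> A) \<le> mu A"
    proof
      fix A assume A: "A \<in> FB"
      have AF: "A \<in> F" using A unfolding FB_def by auto
      have "card (S \<inter> A) \<le> card (OPT F mu w A)"
        using sub1[OF A] L.OPT_props[OF AF] L.finA[OF AF] finite_subset by (intro card_mono) blast+
      then show "card (S \<inter> A) \<le> mu A" using L.OPT_props(3)[OF AF] by simp
    qed
    have BFB: "B \<in> FB" unfolding FB_def using BF by simp
    have K: "(1-c) * (\<Sum>B'\<in>{B'\<in>FB. B' \<subseteq> B}. c^(mu B' - card (S\<inter>B')) - c^(mu B'))
     \<le> 2*(1-c)*real (card(S\<inter>B)) - (1 - c^card(S\<inter>B)) * (1 + c^(mu B - card(S\<inter>B) + 1))"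
      using key[OF finFB _ lamFB _ sle c0 c1 BFB] assms(8) L.finA unfolding FB_def by auto
    have e1: "{B'\<in>FB. B' \<subseteq> B} = FB" unfolding FB_def by auto
    have e2: "S \<inter> B = S" using SOb ObB by auto
    have nn: "0 \<le> (1 - c^card S) * (1 + c^(mu B - card S + 1))"
      using c0 c1 by (intro mult_nonneg_nonneg) (auto simp: power_le_one)
    have K2: "(1-c) * Q \<le> 2*(1-c)*real (card S) - (1 - c^card S) * (1 + c^(mu B - card S + 1))"
      using K by (simp only: e1 e2 Q_def[symmetric])
    have "2*(1-c)*real (card S) = (1-c)*(2*real (card S))" by simp
    then have "(1-c) * Q \<le> (1-c) * (2 * real (card S))" using K2 nn by linarith
    then have "Q \<le> 2 * real (card S)" using c1 by simp
    then show ?thesis using c0 c1 by (intro mult_left_mono) auto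
  qed
  also have "\<dots> = 2 * c / (1 - c) * real (card (OPT_large F mu w m B))" unfolding S_def by simp
  finally show ?thesis .
qed


end
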